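(* Let $n\ge 2$ and let $\mathcal{F}$ be an induced-$\mathcal{D}_2$-saturated family in $\mathcal{B}_n$. If $\emptyset\in\mathcal{F}$ or $[n]\in\mathcal{F}$, then $|\mathcal{F}|\ge n+1$.
   Context: $\mathcal{B}_n$ denotes the Boolean lattice $(2^{[n]},\subseteq)$. A family $\mathcal{F}\subseteq 2^{[n]}$ (ordered by inclusion) is induced-$\mathcal{P}$-saturated if it contains no induced copy of $\mathcal{P}$ (an injection $f$ with $u\le v\iff f(u)\subseteq f(v)$) but every family $\mathcal{F}'$ with $\mathcal{F}\subsetneq\mathcal{F}'\subseteq 2^{[n]}$ contains one. $\mathcal{D}_2$ (the diamond) is the four-element poset $\{A,B,C,D\}$ with $A<B<D$, $A<C<D$, and $B,C$ incomparable. *)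

theory Defs
  imports Main
begin

definition contains_induced ::
  "'p set \<Rightarrow> ('p \<Rightarrow> 'p \<Rightarrow> bool) \<Rightarrow> 'a set set \<Rightarrow> bool" where
  "contains_induced P le F \<longleftrightarrow>
     (\<exists>f. inj_on f P \<and> f ` P \<subseteq> F \<and>
          (\<forall>u\<in>P. \<forall>v\<in>P. le u v \<longleftrightarrow> f u \<subseteq> f v))"

definition induced_saturated ::
  "'p set \<Rightarrow> ('p \<Rightarrow> 'p \<Rightarrow> bool) \<Rightarrow> nat \<Rightarrow> nat set set \<Rightarrow> bool" where
  "induced_saturated P le n F \<longleftrightarrow>
     F \<subseteq> Pow {1..n} \<and> \<not> contains_induced P le F \<and>
     (\<forall>F'. F \<subset> F' \<and> F' \<subseteq> Pow {1..n} \<longrightarrow> contains_induced P le F')"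

text \<open>The diamond D_2 on {0,1,2,3}: A=0, B=1, C=2, D=3 with A<B<D, A<C<D.\<close>
definition diamond_carrier :: "nat set" where
  "diamond_carrier = {0, 1, 2, 3}"

definition diamond_le :: "nat \<Rightarrow> nat \<Rightarrow> bool" where
  "diamond_le u v \<longleftrightarrow> u = v \<or> u = 0 \<or> v = 3"

end

theory Submission
  imports Defs
begin

definition dia :: "nat set set \<Rightarrow> bool" where
  "dia G \<longleftrightarrow> (\<exists>A\<in>G. \<exists>B\<in>G. \<exists>C\<in>G. \<exists>D\<in>G. A \<subset> B \<and> A \<subset> C \<and> B \<subset> D \<and> C \<subset> D
      \<and> \<not> B \<subseteq> C \<and> \<not> C \<subseteq> B)"

lemma dia_intro:
  assumes "A\<in>G" "B\<in>G" "C\<in>G" "D\<in>G" "A \<subset> B" "A \<subset> C" "B \<subset> D" "C \<subset> D"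
    "\<not> B \<subseteq> C" "\<not> C \<subseteq> B"
  shows "dia G"
  unfolding dia_def using assms by blast

lemma dia_dist:
  assumes "A \<subset> B" "A \<subset> C" "B \<subset> D" "C \<subset> D" "\<not> B \<subseteq> C"
  shows "A \<noteq> B" "A \<noteq> C" "A \<noteq> D" "B \<noteq> C" "B \<noteq> D" "C \<noteq> D"
  using assms by blast+

lemma ins_mem: "B \<in> insert X F \<Longrightarrow> B \<noteq> X \<Longrightarrow> B \<in> F"
  by simp

lemma dia_elim:
  assumes "dia G"
  obtains A B C D where "A\<in>G" "B\<in>G" "C\<in>G" "D\<in>G" "A \<subset> B" "A \<subset> C" "B \<subset> D" "C \<subset> D"
    "\<not> B \<subseteq> C" "\<not> C \<subseteq> B"
  using assms unfolding dia_def by blast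

lemma ci_dia: "contains_induced diamond_carrier diamond_le G \<longleftrightarrow> dia G"
proof
  assume a: "contains_induced diamond_carrier diamond_le G"
  define P where "P = diamond_carrier"
  have "\<exists>f. inj_on f P \<and> f ` P \<subseteq> G \<and> (\<forall>u\<in>P. \<forall>v\<in>P. diamond_le u v \<longleftrightarrow> f u \<subseteq> f v)"
    using a unfolding P_def by (simp only: contains_induced_def)
  then obtain f where ff: "inj_on f P \<and> f ` P \<subseteq> G \<and> (\<forall>u\<in>P. \<forall>v\<in>P. diamond_le u v \<longleftrightarrow> f u \<subseteq> f v)"
    by (rule exE)
  have f2: "f ` diamond_carrier \<subseteq> G" using ff unfolding P_def by (rule conjunct1[OF conjunct2])
  have hh: "\<forall>u\<in>diamond_carrier. \<forall>v\<in>diamond_carrier. diamond_le u v \<longleftrightarrow> f u \<subseteq> f v"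
    using ff unfolding P_def by (rule conjunct2[OF conjunct2])
  have h: "diamond_le u v \<longleftrightarrow> f u \<subseteq> f v" if "u\<in>diamond_carrier" "v\<in>diamond_carrier" for u v
    using hh[rule_format, OF that] .
  have c: "0 \<in> diamond_carrier" "1 \<in> diamond_carrier" "2 \<in> diamond_carrier" "3 \<in> diamond_carrier"
    by (simp_all add: diamond_carrier_def)
  have m: "f 0 \<in> G" "f 1 \<in> G" "f 2 \<in> G" "f 3 \<in> G" using f2 c by blast+
  have l: "diamond_le 0 1" "\<not> diamond_le 1 0" "diamond_le 0 2" "\<not> diamond_le 2 0"
       "diamond_le 1 3" "\<not> diamond_le 3 1" "diamond_le 2 3" "\<not> diamond_le 3 2"
       "\<not> diamond_le 1 2" "\<not> diamond_le 2 1" by (simp_all add: diamond_le_def)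
  have "f 0 \<subseteq> f 1" "\<not> f 1 \<subseteq> f 0" "f 0 \<subseteq> f 2" "\<not> f 2 \<subseteq> f 0"
       "f 1 \<subseteq> f 3" "\<not> f 3 \<subseteq> f 1" "f 2 \<subseteq> f 3" "\<not> f 3 \<subseteq> f 2"
       "\<not> f 1 \<subseteq> f 2" "\<not> f 2 \<subseteq> f 1"
    using h[OF c(1) c(2)] h[OF c(2) c(1)] h[OF c(1) c(3)] h[OF c(3) c(1)] h[OF c(2) c(4)]
      h[OF c(4) c(2)] h[OF c(3) c(4)] h[OF c(4) c(3)] h[OF c(2) c(3)] h[OF c(3) c(2)] l
    by simp_all
  then have "f 0 \<subset> f 1 \<and> f 0 \<subset> f 2 \<and> f 1 \<subset> f 3 \<and> f 2 \<subset> f 3 \<and> \<not> f 1 \<subseteq> f 2 \<and> \<not> f 2 \<subseteq> f 1"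
    by (simp add: psubset_eq)
  then show "dia G" using m by (intro dia_intro[of "f 0" G "f 1" "f 2" "f 3"]) simp_all
next
  assume "dia G"
  then obtain A B C D where m: "A\<in>G" "B\<in>G" "C\<in>G" "D\<in>G" and r: "A \<subset> B" "A \<subset> C" "B \<subset> D" "C \<subset> D"
      "\<not> B \<subseteq> C" "\<not> C \<subseteq> B" by (rule dia_elim)
  have s: "A \<subseteq> B" "\<not> B \<subseteq> A" "A \<subseteq> C" "\<not> C \<subseteq> A" "B \<subseteq> D" "\<not> D \<subseteq> B" "C \<subseteq> D" "\<not> D \<subseteq> C"
    "A \<subseteq> D" "\<not> D \<subseteq> A" "A \<subseteq> A" "B \<subseteq> B" "C \<subseteq> C" "D \<subseteq> D" "\<not> B \<subseteq> C" "\<not> C \<subseteq> B"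
    using r by blast+
  have d: "A \<noteq> B" "A \<noteq> C" "A \<noteq> D" "B \<noteq> C" "B \<noteq> D" "C \<noteq> D" using s by blast+
  define f where "f = (\<lambda>u::nat. if u=0 then A else if u=1 then B else if u=2 then C else D)"
  have v: "f 0 = A" "f 1 = B" "f 2 = C" "f 3 = D" by (simp_all add: f_def)
  have dc: "diamond_carrier = {0,1,2,3}" by (simp add: diamond_carrier_def)
  have "inj_on f diamond_carrier" unfolding inj_on_def dc using v d
    by (simp only: ball_simps insert_iff empty_iff simp_thms) (metis d)
  moreover have "f ` diamond_carrier \<subseteq> G" using m v unfolding dc by simp
  moreover have "\<forall>u\<in>diamond_carrier. \<forall>v\<in>diamond_carrier. diamond_le u v \<longleftrightarrow> f u \<subseteq> f v"
    unfolding dc using s v by (simp add: diamond_le_def)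
  ultimately show "contains_induced diamond_carrier diamond_le G"
    unfolding contains_induced_def by (intro exI[of _ f] conjI)
qed

lemma middle_case:
  assumes F: "F \<subseteq> Pow {1..n}" and nd: "\<not> dia F" and e: "{} \<in> F"
    and Z: "Z \<in> F" "i \<notin> Z" and CF: "C \<in> F" and DF: "D \<in> F"
    and r: "insert i Z \<subset> D" "C \<subset> D" "\<not> insert i Z \<subseteq> C" "\<not> C \<subseteq> insert i Z"
  shows "Z \<subset> C \<and> i \<notin> C \<and> i \<in> D"
proof -
  have iD: "i \<in> D" using r by auto
  have ZD: "Z \<subset> D" using r Z by auto
  have "Z \<subseteq> C \<or> C \<subseteq> Z"
  proof (rule ccontr)
    assume a: "\<not> (Z \<subseteq> C \<or> C \<subseteq> Z)"
    have "dia F"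
      by (rule dia_intro[where A="{}" and B=Z and C=C and D=D]) (use e Z CF DF ZD r a in auto)
    then show False using nd by simp
  qed
  then show ?thesis using r iD by auto
qed

lemma key:
  assumes F: "F \<subseteq> Pow {1..n}" and nd: "\<not> dia F" and e: "{} \<in> F"
    and sat: "\<And>X. X \<subseteq> {1..n} \<Longrightarrow> X \<notin> F \<Longrightarrow> dia (insert X F)"
    and i: "i \<in> {1..n}"
  shows "\<exists>Y\<in>F. i \<in> Y \<and> Y - {i} \<in> F"
proof (cases "\<exists>Y\<in>F. i \<in> Y")
  case False
  then have "{i} \<notin> F" by auto
  have "{i} \<subseteq> {1..n}" using i by simp
  then have "dia (insert {i} F)" using \<open>{i} \<notin> F\<close> by (rule sat)
  then obtain A B C D where m: "A\<in>insert {i} F" "B\<in>insert {i} F" "C\<in>insert {i} F" "D\<in>insert {i} F"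
    and r: "A \<subset> B" "A \<subset> C" "B \<subset> D" "C \<subset> D" "\<not> B \<subseteq> C" "\<not> C \<subseteq> B" by (rule dia_elim)
  show ?thesis
  proof (cases "D = {i}")
    case True
    have "B \<subseteq> {i}" "B \<noteq> {i}" using r(3) True by blast+
    then have "B = {}" by (simp add: subset_singleton_iff)
    then have False using r(1) by simp
    then show ?thesis ..
  next
    case False
    then have "D \<in> F" using m(4) by (rule ins_mem[rotated])
    then have "i \<notin> D" using \<open>\<not> (\<exists>Y\<in>F. i \<in> Y)\<close> by auto
    then have "i \<notin> A" "i \<notin> B" "i \<notin> C" using r by blast+
    then have "A \<noteq> {i}" "B \<noteq> {i}" "C \<noteq> {i}" by blast+
    then have "A \<in> F" "B \<in> F" "C \<in> F" using m(1-3) by (blast intro: ins_mem)+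
    then have "dia F" using dia_intro[OF _ _ _ \<open>D \<in> F\<close> r] by blast
    then show ?thesis using nd by simp
  qed
next
  case True
  define S where "S = {Z \<in> F. i \<notin> Z \<and> (\<exists>Y\<in>F. i \<in> Y \<and> Z \<subseteq> Y)}"
  have finF: "finite F" using F by (rule finite_subset) simp
  have finS: "finite S" using finF unfolding S_def by simp
  have "{} \<in> S" using True e unfolding S_def by auto
  then have ne: "card ` S \<noteq> {}" by auto
  have "Max (card ` S) \<in> card ` S" using finS ne by (intro Max_in) auto
  then obtain Z where ZS: "Z \<in> S" and Zmax: "card Z = Max (card ` S)" by auto
  have Zle: "\<And>W. W \<in> S \<Longrightarrow> card W \<le> card Z" using Zmax finS by simp
  from ZS obtain Y where Z: "Z \<in> F" "i \<notin> Z" and Y: "Y \<in> F" "i \<in> Y" "Z \<subseteq> Y" unfolding S_def by auto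
  show ?thesis
  proof (cases "insert i Z \<in> F")
    case True
    show ?thesis
    proof (rule bexI[of _ "insert i Z"])
      show "i \<in> insert i Z \<and> insert i Z - {i} \<in> F" using Z by simp
      show "insert i Z \<in> F" by (rule True)
    qed
  next
    case False
    have XY: "insert i Z \<subseteq> Y" using Y by auto
    have "insert i Z \<subseteq> {1..n}" using XY Y F by blast
    then have "dia (insert (insert i Z) F)" using False by (rule sat)
    then obtain A B C D where m: "A\<in>insert (insert i Z) F" "B\<in>insert (insert i Z) F"
         "C\<in>insert (insert i Z) F" "D\<in>insert (insert i Z) F"
      and r: "A \<subset> B" "A \<subset> C" "B \<subset> D" "C \<subset> D" "\<not> B \<subseteq> C" "\<not> C \<subseteq> B" by (rule dia_elim)
    have contra: "False" if "W \<in> F" "W \<in> F" "Z \<subset> W" "i \<notin> W" "i \<in> D" "W \<subseteq> D" "D \<in> F" for W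
    proof -
      have "W \<in> S" using that unfolding S_def by auto
      then have "card W \<le> card Z" by (rule Zle)
      moreover have "W \<subseteq> {1..n}" using that(1) F by blast
      then have "finite W" by (rule finite_subset) simp
      then have "card Z < card W" using that(3) by (rule psubset_card_mono)
      ultimately show False by linarith
    qed
    note dd = dia_dist[OF r(1-5)]
    consider "A = insert i Z" | "B = insert i Z" | "C = insert i Z" | "D = insert i Z"
      | "A \<in> F" "B \<in> F" "C \<in> F" "D \<in> F" using m by blast
    then show ?thesis
    proof cases
      case 1
      have "B \<noteq> insert i Z" "C \<noteq> insert i Z" "D \<noteq> insert i Z" using dd 1 by simp_all
      then have "B \<in> F" "C \<in> F" "D \<in> F" using m(2-4) ins_mem by blast+
      then have "dia F"
        by (intro dia_intro[where A="{}" and B=B and C=C and D=D]) (use e r in auto)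
      then show ?thesis using nd by simp
    next
      case 2
      have "C \<noteq> insert i Z" "D \<noteq> insert i Z" using dd 2 by simp_all
      then have "C \<in> F" "D \<in> F" using m(3-4) ins_mem by blast+
      then have "Z \<subset> C \<and> i \<notin> C \<and> i \<in> D"
        using middle_case[OF F nd e Z(1,2) \<open>C \<in> F\<close> \<open>D \<in> F\<close>] r 2 by auto
      then show ?thesis using contra[of C] \<open>C \<in> F\<close> \<open>D \<in> F\<close> r by auto
    next
      case 3
      have "B \<noteq> insert i Z" "D \<noteq> insert i Z" using dd 3 by simp_all
      then have "B \<in> F" "D \<in> F" using m(2) m(4) ins_mem by blast+
      then have "Z \<subset> B \<and> i \<notin> B \<and> i \<in> D"
        using middle_case[OF F nd e Z(1,2) \<open>B \<in> F\<close> \<open>D \<in> F\<close>] r 3 by auto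
      then show ?thesis using contra[of B] \<open>B \<in> F\<close> \<open>D \<in> F\<close> r by auto
    next
      case 4
      have "A \<noteq> insert i Z" "B \<noteq> insert i Z" "C \<noteq> insert i Z" using dd 4 by simp_all
      then have "A \<in> F" "B \<in> F" "C \<in> F" using m(1-3) ins_mem by blast+
      then have "dia F"
        by (intro dia_intro[where A=A and B=B and C=C and D=Y]) (use Y r 4 XY in auto)
      then show ?thesis using nd by simp
    next
      case 5
      then have "dia F" using dia_intro[OF 5 r] by blast
      then show ?thesis using nd by simp
    qed
  qed
qed

lemma core:
  assumes F: "F \<subseteq> Pow {1..n}" and nd: "\<not> dia F" and e: "{} \<in> F"
    and sat: "\<And>X. X \<subseteq> {1..n} \<Longrightarrow> X \<notin> F \<Longrightarrow> dia (insert X F)"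
  shows "card F \<ge> n + 1"
proof -
  define phi where "phi i = (SOME Y. Y \<in> F \<and> i \<in> Y \<and> Y - {i} \<in> F)" for i
  have ex: "\<exists>Y\<in>F. i \<in> Y \<and> Y - {i} \<in> F" if "i \<in> {1..n}" for i
    by (rule key[OF F nd e]) (use sat that in auto)
  have ph: "phi i \<in> F \<and> i \<in> phi i \<and> phi i - {i} \<in> F" if "i \<in> {1..n}" for i
    using ex[OF that] unfolding phi_def by (intro someI_ex[of "\<lambda>Y. Y \<in> F \<and> i \<in> Y \<and> Y - {i} \<in> F"]) blast
  have inj: "inj_on phi {1..n}"
  proof (rule inj_onI, rule ccontr)
    fix i j assume i: "i \<in> {1..n}" and j: "j \<in> {1..n}" and eq: "phi i = phi j" and ne: "i \<noteq> j"
    let ?Y = "phi i"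
    have a: "?Y \<in> F" "i \<in> ?Y" "?Y - {i} \<in> F" "j \<in> ?Y" "?Y - {j} \<in> F" using ph[OF i] ph[OF j] eq by auto
    have "dia F"
      by (rule dia_intro[where A="{}" and B="?Y - {i}" and C="?Y - {j}" and D="?Y"]) (use a e ne in auto)
    then show False using nd by simp
  qed
  have sub: "insert {} (phi ` {1..n}) \<subseteq> F" using ph e by auto
  have nin: "{} \<notin> phi ` {1..n}" using ph by fastforce
  have finF: "finite F" using F by (rule finite_subset) simp
  have "card (insert {} (phi ` {1..n})) = n + 1"
    using nin card_image[OF inj] by simp
  then show ?thesis using card_mono[OF finF sub] by simp
qed


lemma dia_compl:
  assumes H: "H \<subseteq> Pow {1..n}" and d: "dia H"
  shows "dia ((\<lambda>X. {1..n} - X) ` H)"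
proof -
  obtain A B C D where m: "A\<in>H" "B\<in>H" "C\<in>H" "D\<in>H" and r: "A \<subset> B" "A \<subset> C" "B \<subset> D" "C \<subset> D"
      "\<not> B \<subseteq> C" "\<not> C \<subseteq> B" using d by (rule dia_elim)
  have s: "A \<subseteq> {1..n}" "B \<subseteq> {1..n}" "C \<subseteq> {1..n}" "D \<subseteq> {1..n}" using m H by auto
  have cp: "\<And>X Y. X \<subseteq> {1..n} \<Longrightarrow> Y \<subseteq> {1..n} \<Longrightarrow> X \<subset> Y \<Longrightarrow> {1..n} - Y \<subset> {1..n} - X"
    by blast
  have cn: "\<And>X Y. X \<subseteq> {1..n} \<Longrightarrow> Y \<subseteq> {1..n} \<Longrightarrow> \<not> Y \<subseteq> X \<Longrightarrow> \<not> {1..n} - X \<subseteq> {1..n} - Y"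
    by blast
  let ?c = "\<lambda>X. {1..n} - X"
  show ?thesis
  proof (rule dia_intro)
    show "{1..n} - D \<in> ?c ` H" using m(4) by (rule imageI)
    show "{1..n} - B \<in> ?c ` H" using m(2) by (rule imageI)
    show "{1..n} - C \<in> ?c ` H" using m(3) by (rule imageI)
    show "{1..n} - A \<in> ?c ` H" using m(1) by (rule imageI)
    show "{1..n} - D \<subset> {1..n} - B" by (rule cp[OF s(2) s(4) r(3)])
    show "{1..n} - D \<subset> {1..n} - C" by (rule cp[OF s(3) s(4) r(4)])
    show "{1..n} - B \<subset> {1..n} - A" by (rule cp[OF s(1) s(2) r(1)])
    show "{1..n} - C \<subset> {1..n} - A" by (rule cp[OF s(1) s(3) r(2)])
    show "\<not> {1..n} - B \<subseteq> {1..n} - C" by (rule cn[OF s(2) s(3) r(6)])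
    show "\<not> {1..n} - C \<subseteq> {1..n} - B" by (rule cn[OF s(3) s(2) r(5)])
  qed
qed

lemma compl_compl: "H \<subseteq> Pow {1..n} \<Longrightarrow> (\<lambda>X. {1..n} - X) ` (\<lambda>X. {1..n} - X) ` H = H"
  by (auto simp: image_iff) (metis Diff_Diff_Int Int_absorb1 PowD subsetD)

theorem lemma3p3:
  fixes n :: nat and F :: "nat set set"
  assumes "n \<ge> 2"
    and "induced_saturated diamond_carrier diamond_le n F"
    and "{} \<in> F \<or> {1..n} \<in> F"
  shows "card F \<ge> n + 1"
proof -
  have F: "F \<subseteq> Pow {1..n}" and nd: "\<not> dia F"
    and sat0: "\<And>F'. F \<subset> F' \<Longrightarrow> F' \<subseteq> Pow {1..n} \<Longrightarrow> dia F'"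
    using assms(2) unfolding induced_saturated_def ci_dia by auto
  have sat: "dia (insert X F)" if "X \<subseteq> {1..n}" "X \<notin> F" for X
    using sat0[of "insert X F"] that F by auto
  show ?thesis
  proof (cases "{} \<in> F")
    case True
    then show ?thesis using core[OF F nd True] sat by blast
  next
    case False
    then have full: "{1..n} \<in> F" using assms(3) by auto
    define c where "c = (\<lambda>X::nat set. {1..n} - X)"
    define G where "G = c ` F"
    have G: "G \<subseteq> Pow {1..n}" unfolding G_def c_def by auto
    have cc: "c ` c ` H = H" if "H \<subseteq> Pow {1..n}" for H
      unfolding c_def using compl_compl[OF that] .
    have eG: "{} \<in> G" unfolding G_def c_def using full by auto
    have ndG: "\<not> dia G"
    proof
      assume "dia G"
      then have "dia (c ` G)" unfolding c_def using dia_compl[OF G] by simp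
      then show False using nd cc[OF F] unfolding G_def by simp
    qed
    have satG: "dia (insert X G)" if "X \<subseteq> {1..n}" "X \<notin> G" for X
    proof -
      have "c X \<notin> F"
      proof
        assume "c X \<in> F"
        then have "c (c X) \<in> G" unfolding G_def by simp
        moreover have "c (c X) = X" unfolding c_def using that(1) by auto
        ultimately show False using that(2) by simp
      qed
      moreover have "c X \<subseteq> {1..n}" unfolding c_def by auto
      ultimately have "dia (insert (c X) F)" using sat by blast
      then have "dia (c ` insert (c X) F)" unfolding c_def using dia_compl F by (metis (no_types, lifting) \<open>c X \<subseteq> {1..n}\<close> c_def insert_subset PowI)
      moreover have "c ` insert (c X) F = insert X G"
        unfolding G_def using \<open>X \<subseteq> {1..n}\<close> by (auto simp: c_def)
      ultimately show ?thesis by simp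
    qed
    have "card G \<ge> n + 1" using core[OF G ndG eG] satG by blast
    moreover have "card G = card F" unfolding G_def
    proof (rule card_image)
      show "inj_on c F" using cc[OF F] by (metis inj_on_inverseI c_def F Diff_Diff_Int Int_absorb1 PowD subsetD)
    qed
    ultimately show ?thesis by simp
  qed
qed

end
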